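(* Let $\alpha=(\alpha_1,\ldots,\alpha_n)$ be a composition, $\sigma\in S_n$, and $i\in\{1,\ldots,n-1\}$ with $\alpha_i=\alpha_{i+1}$. Let $T\in\mathrm{NAF}(\alpha,\sigma)$ and $U\in\mathrm{F}(\alpha,\sigma s_i)$. If $P_i(T,U)\ne0$, then $U$ is non-attacking, i.e. $U\in\mathrm{NAF}(\alpha,\sigma s_i)$.
   Context: Permutations are in one-line notation; $\sigma s_i$ is $\sigma$ with the entries in positions $i,i+1$ exchanged. A composition is a sequence of nonnegative integers. The skyline diagram is $\mathrm{dg}(\alpha)=\{(j,r):1\le j\le n,\ 1\le r\le\alpha_j\}$ ($j$ = column, $r$ = row) and the augmented diagram is $\mathrm{adg}(\alpha)=\mathrm{dg}(\alpha)\cup\{(j,0):1\le j\le n\}$ (row $0$ is the basement). For $u=(j,r)\in\mathrm{dg}(\alpha)$: $\mathrm{leg}(u)=\alpha_j-r$; the left arm set is $\{(j',r-1)\in\mathrm{adg}(\alpha):j'<j,\ \alpha_{j'}<\alpha_j\}$, the right arm set is $\{(j',r)\in\mathrm{dg}(\alpha):j'>j,\ \alpha_{j'}\le\alpha_j\}$, $\mathrm{Arm}(u)$ is their union and $\mathrm{arm}(u)=|\mathrm{Arm}(u)|$. Two boxes of $\mathrm{adg}(\alpha)$ attack each other if they are in the same row, or in consecutive rows with the box in the higher row strictly to the right of the box in the lower row. A filling of shape $\alpha$ and basement $\tau\in S_n$ is a map $T:\mathrm{adg}(\alpha)\to\{1,\ldots,n\}$ with $T(j,0)=\tau_j$; $\mathrm{F}(\alpha,\tau)$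 is the set of these, and $\mathrm{NAF}(\alpha,\tau)$ the subset of non-attacking ones (attacking boxes have distinct entries). For integers $a,b$ let $\chi(a,b)=1$ if $a>b$ and $0$ otherwise, and $\chi(a,b,c)=\chi(a,b)+\chi(b,c)-\chi(a,c)$. Fix $i$ with $\alpha_i=\alpha_{i+1}$. For a filling $T$ and $0\le r\le\alpha_i$, $\mathrm{swap}_r(T)$ exchanges the entries of boxes $(i,r)$ and $(i+1,r)$, and $\Omega_{0,h}=\mathrm{swap}_h\circ\cdots\circ\mathrm{swap}_0$. For $T\in\mathrm{NAF}(\alpha,\tau)$ and $0\le r\le\alpha_i-1$, let $a=T(i,r)$, $b=T(i+1,r)$, $c=T(i,r+1)$, $d=T(i+1,r+1)$, $A=\mathrm{arm}(i+1,r+1)$, $\ell=\mathrm{leg}(i+1,r+1)$, and define $\rho_r(T)\in\mathbb{Q}(q,t)$: if $a,b,c,d$ are distinct, $\rho_r(T)=0$ when $\chi(c,d,a)=\chi(c,d,b)$ and $\rho_r(T)=1$ when $\chi(c,d,a)=\chi(d,c,b)$; if exactly three of them are distinct, then $\rho_r(T)=0$ if $b=c$, $\rho_r(T)=1$ if $b=d$, and $\rho_r(T)=t^{1-\chi(d,a,b)}\frac{1-q^{\ell+1}t^{A+1}}{1-q^{\ell+1}t^{A+2}}$ if $a=c$; if $a=c$ and $b=d$, $\rho_r(T)=1$. Also set $\rho_{\alpha_i}(T)=0$. For $T\in\mathrm{NAF}(\alpha,\tau)$ and $U\in\mathrm{F}(\alpha,\tau s_i)$, $P_i(T,U)=\left(\prod_{r=0}^{h-1}\rho_r(T)\right)(1-\rho_h(T))$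 if $U=\Omega_{0,h}(T)$ for some $h\in\{0,\ldots,\alpha_i\}$, and $P_i(T,U)=0$ otherwise. *)

theory Defs
  imports "HOL-Computational_Algebra.Polynomial" "HOL-Computational_Algebra.Fraction_Field"
begin

text \<open>Conventions: a composition is a list alpha of naturals, n = length alpha,
  columns are 1-indexed, alpha_j = alpha ! (j-1).  A permutation in one-line
  notation is a list sigma with distinct entries and set sigma = {1..n},
  sigma_j = sigma ! (j-1).  Boxes are pairs (column, row).\<close>

definition ht :: "nat list \<Rightarrow> nat \<Rightarrow> nat" where
  "ht \<alpha> j = \<alpha> ! (j - 1)"

definition ent :: "nat list \<Rightarrow> nat \<Rightarrow> nat" where
  "ent \<sigma> j = \<sigma> ! (j - 1)"

definition is_perm :: "nat \<Rightarrow> nat list \<Rightarrow> bool" where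
  "is_perm n \<sigma> \<longleftrightarrow> length \<sigma> = n \<and> distinct \<sigma> \<and> set \<sigma> = {1..n}"

definition perm_si :: "nat list \<Rightarrow> nat \<Rightarrow> nat list" where
  "perm_si \<sigma> i = \<sigma>[i - 1 := \<sigma> ! i, i := \<sigma> ! (i - 1)]"

definition dg :: "nat list \<Rightarrow> (nat \<times> nat) set" where
  "dg \<alpha> = {(j, r). 1 \<le> j \<and> j \<le> length \<alpha> \<and> 1 \<le> r \<and> r \<le> ht \<alpha> j}"

definition adg :: "nat list \<Rightarrow> (nat \<times> nat) set" where
  "adg \<alpha> = dg \<alpha> \<union> {(j, 0) | j. 1 \<le> j \<and> j \<le> length \<alpha>}"

definition leg :: "nat list \<Rightarrow> nat \<times> nat \<Rightarrow> nat" where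
  "leg \<alpha> u = ht \<alpha> (fst u) - snd u"

definition Arm :: "nat list \<Rightarrow> nat \<times> nat \<Rightarrow> (nat \<times> nat) set" where
  "Arm \<alpha> u =
     {(j', r'). (j', r') \<in> adg \<alpha> \<and> r' = snd u - 1 \<and> j' < fst u \<and> ht \<alpha> j' < ht \<alpha> (fst u)}
   \<union> {(j', r'). (j', r') \<in> dg \<alpha> \<and> r' = snd u \<and> j' > fst u \<and> ht \<alpha> j' \<le> ht \<alpha> (fst u)}"

definition arm :: "nat list \<Rightarrow> nat \<times> nat \<Rightarrow> nat" where
  "arm \<alpha> u = card (Arm \<alpha> u)"

definition attack :: "nat \<times> nat \<Rightarrow> nat \<times> nat \<Rightarrow> bool" where
  "attack u v \<longleftrightarrow> u \<noteq> v \<and>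
     (snd u = snd v
      \<or> (snd v = snd u + 1 \<and> fst v > fst u)
      \<or> (snd u = snd v + 1 \<and> fst u > fst v))"

definition fillings :: "nat list \<Rightarrow> nat list \<Rightarrow> (nat \<times> nat \<Rightarrow> nat) set" where
  "fillings \<alpha> \<tau> = {T. (\<forall>x\<in>adg \<alpha>. T x \<in> {1..length \<alpha>})
                       \<and> (\<forall>x. x \<notin> adg \<alpha> \<longrightarrow> T x = 0)
                       \<and> (\<forall>j. 1 \<le> j \<and> j \<le> length \<alpha> \<longrightarrow> T (j, 0) = ent \<tau> j)}"

definition NAF :: "nat list \<Rightarrow> nat list \<Rightarrow> (nat \<times> nat \<Rightarrow> nat) set" where
  "NAF \<alpha> \<tau> = {T \<in> fillings \<alpha> \<tau>.
      \<forall>u\<in>adg \<alpha>. \<forall>v\<in>adg \<alpha>. attack u v \<longrightarrow> T u \<noteq> T v}"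

definition chi :: "nat \<Rightarrow> nat \<Rightarrow> int" where
  "chi a b = (if a > b then 1 else 0)"

definition chi3 :: "nat \<Rightarrow> nat \<Rightarrow> nat \<Rightarrow> int" where
  "chi3 a b c = chi a b + chi b c - chi a c"

definition swap_row :: "nat \<Rightarrow> nat \<Rightarrow> (nat \<times> nat \<Rightarrow> nat) \<Rightarrow> (nat \<times> nat \<Rightarrow> nat)" where
  "swap_row i r T = T((i, r) := T (i + 1, r), (i + 1, r) := T (i, r))"

primrec Omega :: "nat \<Rightarrow> nat \<Rightarrow> (nat \<times> nat \<Rightarrow> nat) \<Rightarrow> (nat \<times> nat \<Rightarrow> nat)" where
  "Omega i 0 T = swap_row i 0 T"
| "Omega i (Suc h) T = swap_row i (Suc h) (Omega i h T)"

text \<open>The field Q(q,t), realised as the fraction field of Q[t][q].\<close>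
type_synonym qt = "rat poly poly fract"

definition qv :: qt where "qv = Fract [:0, 1:] 1"
definition tv :: qt where "tv = Fract [:[:0, 1:]:] 1"

definition rho :: "nat list \<Rightarrow> nat \<Rightarrow> (nat \<times> nat \<Rightarrow> nat) \<Rightarrow> nat \<Rightarrow> qt" where
  "rho \<alpha> i T r =
    (if r = ht \<alpha> i then 0 else
     (let a = T (i, r); b = T (i + 1, r); c = T (i, r + 1); d = T (i + 1, r + 1);
          A = arm \<alpha> (i + 1, r + 1); l = leg \<alpha> (i + 1, r + 1) in
      if card {a, b, c, d} = 4 then
        (if chi3 c d a = chi3 c d b then 0
         else if chi3 c d a = chi3 d c b then 1 else 0)
      else if card {a, b, c, d} = 3 then
        (if b = c then 0
         else if b = d then 1
         else if a = c then
           tv ^ nat (1 - chi3 d a b) * (1 - qv ^ (l + 1) * tv ^ (A + 1))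
             / (1 - qv ^ (l + 1) * tv ^ (A + 2))
         else 0)
      else if a = c \<and> b = d then 1
      else 0))"

definition P_i :: "nat list \<Rightarrow> nat \<Rightarrow> (nat \<times> nat \<Rightarrow> nat) \<Rightarrow> (nat \<times> nat \<Rightarrow> nat) \<Rightarrow> qt" where
  "P_i \<alpha> i T U =
    (if \<exists>h \<le> ht \<alpha> i. U = Omega i h T then
       (let h = (SOME h. h \<le> ht \<alpha> i \<and> U = Omega i h T) in
        (\<Prod>r<h. rho \<alpha> i T r) * (1 - rho \<alpha> i T h))
     else 0)"

end

theory Submission
  imports Defs
begin

lemma adg_iff: "(j,r) \<in> adg \<alpha> \<longleftrightarrow> 1 \<le> j \<and> j \<le> length \<alpha> \<and> r \<le> ht \<alpha> j"
  by (auto simp: adg_def dg_def)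

lemma Omega_eq: "Omega i h T (j,r) = (if r \<le> h \<and> j = i then T(i+1,r) else if r \<le> h \<and> j = i+1 then T(i,r) else T(j,r))"
  by (induction h arbitrary: j r) (auto simp: swap_row_def)

lemma rho_zero:
  assumes "r \<noteq> ht \<alpha> i" "T(i,r) \<noteq> T(i+1,r)" "T(i,r+1) \<noteq> T(i+1,r+1)" "T(i+1,r) = T(i,r+1)"
  shows "rho \<alpha> i T r = 0"
  using assms unfolding rho_def Let_def
  by (auto simp: card_insert_if)

lemma rho_one:
  assumes "r \<noteq> ht \<alpha> i" "T(i,r) \<noteq> T(i+1,r)" "T(i,r+1) \<noteq> T(i+1,r+1)" "T(i+1,r) = T(i+1,r+1)"
  shows "rho \<alpha> i T r = 1"
  using assms unfolding rho_def Let_def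
  by (auto simp: card_insert_if)

theorem proposition3p6:
  fixes \<alpha> \<sigma> :: "nat list" and i :: nat and T U :: "nat \<times> nat \<Rightarrow> nat"
  assumes "is_perm (length \<alpha>) \<sigma>"
    and "1 \<le> i" and "i \<le> length \<alpha> - 1"
    and "ht \<alpha> i = ht \<alpha> (i + 1)"
    and "T \<in> NAF \<alpha> \<sigma>"
    and "U \<in> fillings \<alpha> (perm_si \<sigma> i)"
    and "P_i \<alpha> i T U \<noteq> 0"
  shows "U \<in> NAF \<alpha> (perm_si \<sigma> i)"
proof -
  define m where "m = ht \<alpha> i"
  have hm: "ht \<alpha> (i+1) = m" using assms(4) m_def by simp
  have i1: "i + 1 \<le> length \<alpha>" using assms(2,3) by linarith
  have ex: "\<exists>h \<le> ht \<alpha> i. U = Omega i h T"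
    using assms(7) unfolding P_i_def by (auto split: if_splits)
  define h where "h = (SOME h. h \<le> ht \<alpha> i \<and> U = Omega i h T)"
  have hprop: "h \<le> ht \<alpha> i \<and> U = Omega i h T"
    unfolding h_def using someI_ex[OF ex[unfolded Bex_def]] by blast
  hence hle: "h \<le> m" and hU: "U = Omega i h T" using m_def by auto
  have Pdef: "P_i \<alpha> i T U = (\<Prod>r<h. rho \<alpha> i T r) * (1 - rho \<alpha> i T h)"
    unfolding P_i_def using ex h_def by (simp add: Let_def)
  have prodnz: "rho \<alpha> i T r \<noteq> 0" if "r < h" for r
    using assms(7) that unfolding Pdef by auto
  have rh: "rho \<alpha> i T h \<noteq> 1" using assms(7) unfolding Pdef by auto
  have TNA: "\<And>u v. u \<in> adg \<alpha> \<Longrightarrow> v \<in> adg \<alpha> \<Longrightarrow> attack u v \<Longrightarrow> T u \<noteq> T v"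
    using assms(5) unfolding NAF_def by blast
  have Trow: "T (j1, r) \<noteq> T (j2, r)" if "(j1,r) \<in> adg \<alpha>" "(j2,r) \<in> adg \<alpha>" "j1 \<noteq> j2" for j1 j2 r
    using TNA[OF that(1,2)] that(3) by (auto simp: attack_def)
  have Tdiag: "T (j1, Suc r) \<noteq> T (j2, r)" if "(j1,Suc r) \<in> adg \<alpha>" "(j2,r) \<in> adg \<alpha>" "j1 > j2" for j1 j2 r
    using TNA[OF that(1,2)] that(3) by (auto simp: attack_def)
  have Trow': "j1 = j2" if "T (j1, r) = T (j2, r)" "(j1,r) \<in> adg \<alpha>" "(j2,r) \<in> adg \<alpha>" for j1 j2 r
    using Trow that by blast
  have Tdiag': "\<not> j1 > j2" if "T (j1, Suc r) = T (j2, r)" "(j1,Suc r) \<in> adg \<alpha>" "(j2,r) \<in> adg \<alpha>" for j1 j2 r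
    using Tdiag that by blast
  have hmS: "ht \<alpha> (Suc i) = m" "ht \<alpha> i = m" using hm m_def by auto
  have iS: "Suc i \<le> length \<alpha>" "Suc 0 \<le> i" "i \<le> length \<alpha>" using i1 assms(2) by auto
  have adgi: "(i, r) \<in> adg \<alpha>" "(i+1, r) \<in> adg \<alpha>" if "r \<le> m" for r
    using that assms(2) i1 hm m_def by (auto simp: adg_iff)
  have rowi: "T (i, r) \<noteq> T (i+1, r)" if "r \<le> m" for r
    using Trow[OF adgi(1)[OF that] adgi(2)[OF that]] by simp
  have bc: "T (i+1, r) \<noteq> T (i, Suc r)" if "r < h" for r
  proof
    assume e: "T (i+1, r) = T (i, Suc r)"
    have "rho \<alpha> i T r = 0"
      apply (rule rho_zero)
      using that hle m_def e rowi[of r] rowi[of "Suc r"]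
      by auto
    thus False using prodnz[OF that] by simp
  qed
  have bd: "T (i+1, h) \<noteq> T (i+1, Suc h)" if "h < m"
  proof
    assume e: "T (i+1, h) = T (i+1, Suc h)"
    have "rho \<alpha> i T h = 1"
      apply (rule rho_one)
      using that hle m_def e rowi[of h] rowi[of "Suc h"]
      by auto
    thus False using rh by simp
  qed
  have Urow: "U (j1, r) \<noteq> U (j2, r)" if "(j1,r) \<in> adg \<alpha>" "(j2,r) \<in> adg \<alpha>" "j1 \<noteq> j2" for j1 j2 r
    using that unfolding hU Omega_eq
    by (auto dest!: Trow' simp: adg_iff hmS iS intro: le_trans[OF _ hle])
  have Udiag: "U (j1, Suc r) \<noteq> U (j2, r)" if "(j1,Suc r) \<in> adg \<alpha>" "(j2,r) \<in> adg \<alpha>" "j1 > j2" for j1 j2 r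
  proof
    assume e: "U (j1, Suc r) = U (j2, r)"
    have j2l: "j2 \<le> length \<alpha>" "Suc r \<le> ht \<alpha> j1" "j1 \<le> length \<alpha>" using that by (auto simp: adg_iff)
    show False
    proof (cases "j1 = Suc i \<and> j2 = i")
      case True
      show False
      proof (cases "Suc r \<le> h")
        case True
        thus False using e bc[of r] \<open>j1 = Suc i \<and> j2 = i\<close> unfolding hU Omega_eq by auto
      next
        case False
        show False
        proof (cases "r = h")
          case True
          thus False using e bd \<open>j1 = Suc i \<and> j2 = i\<close> j2l hmS unfolding hU Omega_eq by auto
        next
          case False
          thus False using e \<open>\<not> Suc r \<le> h\<close> \<open>j1 = Suc i \<and> j2 = i\<close> Tdiag[OF that] unfolding hU Omega_eq by auto
        qed
      qed
    next
      case False
      thus False using e that j2l unfolding hU Omega_eq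
        by (auto dest!: Tdiag' simp: adg_iff hmS iS j2l intro: le_trans[OF _ hle] split: if_splits)
    qed
  qed
  show ?thesis
    unfolding NAF_def
  proof (intro CollectI conjI assms(6) ballI impI)
    fix u v assume u: "u \<in> adg \<alpha>" and v: "v \<in> adg \<alpha>" and a: "attack u v"
    obtain j1 r1 j2 r2 where uv: "u = (j1, r1)" "v = (j2, r2)" by force
    show "U u \<noteq> U v"
      using a u v Urow Udiag unfolding uv attack_def
      by (auto simp del: One_nat_def simp add: Suc_eq_plus1[symmetric]) (metis Udiag)+
  qed
qed

end
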